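(* Let $d\ge2$, $x\in[-1,1]$, and let $\rho^{AC}$ be the $d\otimes d^2$ state defined in the context. Then its fully entangled fraction is $$\mathcal{F}(\rho^{AC})=\frac14\Big((d+1)\sqrt{\lambda_+}+(d-1)\sqrt{\lambda_-}\Big)^2=\frac{1}{2d}\Big(d+x+\sqrt{(d^2-1)(1-x^2)}\Big).$$
   Context: Let $\mathcal{H}^A=\mathbb{C}^d$ with orthonormal basis $\{|1\rangle,\dots,|d\rangle\}$ and let $\mathcal{H}^C=\mathbb{C}^{d^2}$ with orthonormal basis $\{|\mu^{(+)}_{kl}\rangle\}_{1\le k\le l\le d}\cup\{|\mu^{(-)}_{kl}\rangle\}_{1\le k<l\le d}$. For $x\in[-1,1]$ put $\lambda_\pm=\frac{1\pm x}{d(d\pm1)}$, and let $\alpha,\theta\in[0,\pi/2]$ be defined by $\cos\alpha=\sqrt{d\lambda_+}$ and $\cos\theta=\sqrt{\lambda_+/(\lambda_++\lambda_-)}$. For $r=1,\dots,d$ let $$|\Psi_r\rangle=\cos\alpha\,|r\rangle|\mu^{(+)}_{rr}\rangle+\frac{\sin\alpha}{\sqrt{d-1}}\sum_{k=1}^{r-1}|k\rangle\big(\cos\theta|\mu^{(+)}_{kr}\rangle+\sin\theta|\mu^{(-)}_{kr}\rangle\big)+\frac{\sin\alpha}{\sqrt{d-1}}\sum_{k=r+1}^{d}|k\rangle\big(\cos\theta|\mu^{(+)}_{rk}\rangle-\sin\theta|\mu^{(-)}_{rk}\rangle\big),$$ and $\rho^{AC}=\frac1d\sum_{r=1}^d|\Psi_r\rangle\langle\Psi_r|$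 (the $B$-complement of the $d\otimes d$ Werner state $\rho_{\mathrm w}^{AB}=\frac{d-x}{d^3-d}\mathbb{I}+\frac{dx-1}{d^3-d}F$, $F$ the swap). Fully entangled fraction: for a state $\rho$ on $\mathbb{C}^d\otimes\mathbb{C}^{d^2}$, fix an orthonormal basis $\{|e_m\rangle\}_{m=1}^{d^2}$ of the second factor and set $|\psi^{\max}_i\rangle=\frac1{\sqrt d}\sum_{j=1}^d|j\rangle\otimes|e_{j+(i-1)d}\rangle$, $i=1,\dots,d$; then $\mathcal{F}(\rho)=\max_{V}\sum_{i=1}^{d}\langle\psi^{\max}_i|(\mathbb{I}\otimes V)\rho(\mathbb{I}\otimes V^\dagger)|\psi^{\max}_i\rangle$, the maximum over all unitaries $V$ on the second factor. *)

theory Defs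
  imports Complex_Main
begin

text \<open>Vectors are functions nat => complex (only indices below the dimension matter),
  matrices are functions nat => nat => complex. All indices are 0-based.
  The space C^d (x) C^(d^2) is identified with C^(d^3) via (j,m) |-> j*d^2 + m.\<close>

definition ket :: "nat \<Rightarrow> nat \<Rightarrow> complex" where
  "ket i = (\<lambda>j. if j = i then 1 else 0)"

definition tens :: "nat \<Rightarrow> (nat \<Rightarrow> complex) \<Rightarrow> (nat \<Rightarrow> complex) \<Rightarrow> nat \<Rightarrow> complex" where
  "tens D u v = (\<lambda>n. u (n div D) * v (n mod D))"

text \<open>Orthonormal basis of C^(d^2): mu^(+)_{kl} (k \<le> l) is the standard basis vector
  with index k*d+l, and mu^(-)_{kl} (k < l) the one with index l*d+k.\<close>
definition mup :: "nat \<Rightarrow> nat \<Rightarrow> nat \<Rightarrow> nat \<Rightarrow> complex" where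
  "mup d k l = ket (k * d + l)"
definition mum :: "nat \<Rightarrow> nat \<Rightarrow> nat \<Rightarrow> nat \<Rightarrow> complex" where
  "mum d k l = ket (l * d + k)"

definition lam_p :: "nat \<Rightarrow> real \<Rightarrow> real" where
  "lam_p d x = (1 + x) / (real d * (real d + 1))"
definition lam_m :: "nat \<Rightarrow> real \<Rightarrow> real" where
  "lam_m d x = (1 - x) / (real d * (real d - 1))"

definition alpha :: "nat \<Rightarrow> real \<Rightarrow> real" where
  "alpha d x = arccos (sqrt (real d * lam_p d x))"
definition theta :: "nat \<Rightarrow> real \<Rightarrow> real" where
  "theta d x = arccos (sqrt (lam_p d x / (lam_p d x + lam_m d x)))"

definition Psi :: "nat \<Rightarrow> real \<Rightarrow> nat \<Rightarrow> nat \<Rightarrow> complex" where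
  "Psi d x r =
    (let D = d^2; ca = complex_of_real (cos (alpha d x));
         s = complex_of_real (sin (alpha d x) / sqrt (real d - 1));
         ct = complex_of_real (cos (theta d x)); st = complex_of_real (sin (theta d x))
     in (\<lambda>n. ca * tens D (ket r) (mup d r r) n
            + s * (\<Sum>k\<in>{..<r}. tens D (ket k) (\<lambda>m. ct * mup d k r m + st * mum d k r m) n)
            + s * (\<Sum>k\<in>{r<..<d}. tens D (ket k) (\<lambda>m. ct * mup d r k m - st * mum d r k m) n)))"

definition rhoAC :: "nat \<Rightarrow> real \<Rightarrow> nat \<Rightarrow> nat \<Rightarrow> complex" where
  "rhoAC d x = (\<lambda>a b. (1 / of_nat d) * (\<Sum>r<d. Psi d x r a * cnj (Psi d x r b)))"

definition unitary_on :: "nat \<Rightarrow> (nat \<Rightarrow> nat \<Rightarrow> complex) \<Rightarrow> bool" where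
  "unitary_on D V \<longleftrightarrow>
     (\<forall>a<D. \<forall>b<D. (\<Sum>c<D. V a c * cnj (V b c)) = (if a = b then 1 else 0))"

definition idtens :: "nat \<Rightarrow> (nat \<Rightarrow> nat \<Rightarrow> complex) \<Rightarrow> nat \<Rightarrow> nat \<Rightarrow> complex" where
  "idtens D V = (\<lambda>a b. if a div D = b div D then V (a mod D) (b mod D) else 0)"

definition mmul :: "nat \<Rightarrow> (nat \<Rightarrow> nat \<Rightarrow> complex) \<Rightarrow> (nat \<Rightarrow> nat \<Rightarrow> complex) \<Rightarrow> nat \<Rightarrow> nat \<Rightarrow> complex" where
  "mmul N A B = (\<lambda>a b. \<Sum>c<N. A a c * B c b)"

definition madj :: "(nat \<Rightarrow> nat \<Rightarrow> complex) \<Rightarrow> nat \<Rightarrow> nat \<Rightarrow> complex" where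
  "madj A = (\<lambda>a b. cnj (A b a))"

definition psimax :: "nat \<Rightarrow> nat \<Rightarrow> nat \<Rightarrow> complex" where
  "psimax d i = (\<lambda>n. complex_of_real (1 / sqrt (real d)) *
                     (\<Sum>j<d. tens (d^2) (ket j) (ket (j + i * d)) n))"

definition FEF :: "nat \<Rightarrow> (nat \<Rightarrow> nat \<Rightarrow> complex) \<Rightarrow> real" where
  "FEF d \<rho> = (GREATEST f. \<exists>V. unitary_on (d^2) V \<and>
     (let N = d^3; W = idtens (d^2) V; M = mmul N (mmul N W \<rho>) (madj W) in
      complex_of_real f = (\<Sum>i<d. \<Sum>a<N. \<Sum>b<N. cnj (psimax d i a) * M a b * psimax d i b)))"

end

theory Submission
  imports Defs "Jordan_Normal_Form.Determinant" "HOL-Analysis.Convex"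
begin
locale fs =
  fixes d :: nat and x :: real
  assumes d2: "d \<ge> 2" and xl: "-1 \<le> x" and xu: "x \<le> 1"
begin

definition "sg = sqrt (real d * lam_p d x)"
definition "dl = sqrt (real d * lam_m d x)"
definition "c1 = sin (alpha d x) / sqrt (real d - 1) * cos (theta d x)"
definition "c2 = sin (alpha d x) / sqrt (real d - 1) * sin (theta d x)"

lemma rd: "real d \<ge> 2" using d2 by simp
lemma nz: "real d \<noteq> 0" "real d - 1 \<noteq> 0" "real d + 1 \<noteq> 0" "real d - 1 > 0"
  using rd by auto
lemma lp_nn: "lam_p d x \<ge> 0" using d2 xl by (simp add: lam_p_def)
lemma lm_nn: "lam_m d x \<ge> 0" using d2 xu by (simp add: lam_m_def)
lemma sg_nn: "sg \<ge> 0" unfolding sg_def using lp_nn by simp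
lemma dl_nn: "dl \<ge> 0" unfolding dl_def using lm_nn by simp
lemma dlp_le: "real d * lam_p d x \<le> 1"
proof -
  have "real d * lam_p d x = (1+x)/(real d + 1)" using nz by (simp add: lam_p_def)
  also have "\<dots> \<le> 1" using rd xu by (simp add: field_simps)
  finally show ?thesis .
qed
lemma sg_le: "sg \<le> 1" unfolding sg_def using dlp_le by simp
lemma sum_pos: "lam_p d x + lam_m d x > 0"
proof -
  have "lam_p d x + lam_m d x = 2*(real d - x)/(real d*(real d+1)*(real d - 1))"
    using rd unfolding lam_p_def lam_m_def by (simp add: divide_simps) (simp add: algebra_simps)
  moreover have "real d - x > 0" using rd xu by simp
  ultimately show ?thesis using nz rd by simp
qed

lemma cos_alpha: "cos (alpha d x) = sg"
  unfolding alpha_def sg_def[symmetric] using sg_nn sg_le by (intro cos_arccos) auto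

lemma sin_alpha: "sin (alpha d x) = sqrt (1 - real d * lam_p d x)"
proof -
  have "sin (alpha d x) = sqrt (1 - sg^2)"
    unfolding alpha_def sg_def[symmetric] by (rule sin_arccos) (use sg_nn sg_le in auto)
  also have "\<dots> = sqrt (1 - real d * lam_p d x)" using lp_nn by (simp add: sg_def)
  finally show ?thesis .
qed

definition "tt = lam_p d x / (lam_p d x + lam_m d x)"
lemma tt_bounds: "0 \<le> tt" "tt \<le> 1" using lp_nn lm_nn sum_pos by (auto simp: tt_def field_simps)
lemma tt_sq: "-1 \<le> sqrt tt" using tt_bounds real_sqrt_ge_zero[of tt] by linarith
lemma cos_theta: "cos (theta d x) = sqrt tt"
  unfolding theta_def tt_def[symmetric] using tt_bounds tt_sq by (intro cos_arccos) auto
lemma sin_theta: "sin (theta d x) = sqrt (1 - tt)"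
proof -
  have "sin (theta d x) = sqrt (1 - (sqrt tt)^2)"
    unfolding theta_def tt_def[symmetric] by (rule sin_arccos) (use tt_bounds tt_sq in auto)
  then show ?thesis using tt_bounds by simp
qed

lemma key_ratio: "(1 - real d * lam_p d x) / (real d - 1) = real d / 2 * (lam_p d x + lam_m d x)"
  using rd unfolding lam_p_def lam_m_def by (simp add: divide_simps) (simp add: algebra_simps)

lemma c1_eq: "c1 = sg / sqrt 2"
proof -
  have nn: "c1 \<ge> 0" unfolding c1_def using sin_alpha cos_theta nz dlp_le tt_bounds by simp
  have "c1^2 = (1 - real d * lam_p d x) / (real d - 1) * tt"
    unfolding c1_def sin_alpha cos_theta using tt_bounds dlp_le nz
    by (simp add: power_mult_distrib power_divide)
  also have "\<dots> = real d * lam_p d x / 2" unfolding key_ratio tt_def using sum_pos by (simp add: field_simps)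
  also have "\<dots> = (sg / sqrt 2)^2" unfolding sg_def using lp_nn d2 by (simp add: power_divide)
  finally show ?thesis using nn sg_nn power2_eq_iff_nonneg[of c1 "sg / sqrt 2"] by simp
qed

lemma c2_eq: "c2 = dl / sqrt 2"
proof -
  have nn: "c2 \<ge> 0" unfolding c2_def using sin_alpha sin_theta nz dlp_le tt_bounds by simp
  have "c2^2 = (1 - real d * lam_p d x) / (real d - 1) * (1 - tt)"
    unfolding c2_def sin_alpha sin_theta using tt_bounds dlp_le nz
    by (simp add: power_mult_distrib power_divide)
  also have "\<dots> = real d * lam_m d x / 2" unfolding key_ratio tt_def using sum_pos by (simp add: field_simps)
  also have "\<dots> = (dl / sqrt 2)^2" unfolding dl_def using lm_nn d2 by (simp add: power_divide)
  finally show ?thesis using nn dl_nn power2_eq_iff_nonneg[of c2 "dl / sqrt 2"] by simp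
qed

end

lemma sum_mult_prod:
  fixes h :: "nat \<Rightarrow> 'a::comm_monoid_add" and A B :: nat
  shows "(\<Sum>e<A * B. h e) = (\<Sum>i<A. \<Sum>j<B. h (i * B + j))"
proof -
  have "(\<Sum>e<A * B. h e) = (\<Sum>i<A. sum h {i * B..<i * B + B})"
    using sum.nat_group[of h B A] by simp
  also have "\<dots> = (\<Sum>i<A. \<Sum>j<B. h (i * B + j))"
  proof (rule sum.cong[OF refl])
    fix i
    have "sum h {i * B..<i * B + B} = sum h {0 + i*B..<B + i*B}" by (simp add: add.commute)
    also have "\<dots> = (\<Sum>j\<in>{0..<B}. h (j + i*B))" by (rule sum.shift_bounds_nat_ivl)
    finally show "sum h {i * B..<i * B + B} = (\<Sum>j<B. h (i * B + j))"
      by (simp add: atLeast0LessThan add.commute)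
  qed
  finally show ?thesis .
qed

context fs begin

lemma idx_swap: "j < d \<Longrightarrow> r < d \<Longrightarrow> j * d + r = r * d + j \<Longrightarrow> j = r"
proof (rule ccontr)
  assume a: "j < d" "r < d" "j * d + r = r * d + j" "j \<noteq> r"
  have "(j * d + r) mod d = (r * d + j) mod d" using a(3) by (simp only:)
  then have "r mod d = j mod d" by simp
  with a show False by simp
qed

definition "e1 r j = (if j = r then sg else if j < r then c1 else if j < d then - c2 else 0)"
definition "e2 r j = (if j < r then c2 else if r < j \<and> j < d then c1 else 0)"

lemma Psi_form:
  assumes "r < d"
  shows "Psi d x r n = complex_of_real (e1 r (n div d^2)) * (if n mod d^2 = (n div d^2) * d + r then 1 else 0)
      + complex_of_real (e2 r (n div d^2)) * (if n mod d^2 = r * d + n div d^2 then 1 else 0)"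
proof -
  define j where "j = n div d^2"
  define m where "m = n mod d^2"
  have A: "(\<Sum>k<r. tens (d^2) (ket k) (\<lambda>m. ct * mup d k r m + st * mum d k r m) n)
      = (if j < r then ct * (if m = j * d + r then 1 else 0) + st * (if m = r * d + j then 1 else 0) else 0)" for ct st
    unfolding tens_def ket_def mup_def mum_def j_def[symmetric] m_def[symmetric]
    by (simp add: if_distrib[where f="\<lambda>a. a * _"] cong: if_cong)
  have B: "(\<Sum>k\<in>{r<..<d}. tens (d^2) (ket k) (\<lambda>m. ct * mup d r k m - st * mum d r k m) n)
      = (if r < j \<and> j < d then ct * (if m = r * d + j then 1 else 0) - st * (if m = j * d + r then 1 else 0) else 0)" for ct st
    unfolding tens_def ket_def mup_def mum_def j_def[symmetric] m_def[symmetric]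
    by (simp add: if_distrib[where f="\<lambda>a. a * _"] cong: if_cong)
  have C: "tens (d^2) (ket r) (mup d r r) n = (if j = r \<and> m = r * d + r then 1 else 0)"
    unfolding tens_def ket_def mup_def j_def m_def by simp
  have gen: "ca * (if j = r \<and> m = r * d + r then 1 else 0)
     + S * (if j < r then CT * (if m = j * d + r then 1 else 0) + ST * (if m = r * d + j then 1 else 0) else 0)
     + S * (if r < j \<and> j < d then CT * (if m = r * d + j then 1 else 0) - ST * (if m = j * d + r then 1 else 0) else 0)
     = complex_of_real (e1 r j) * (if m = j * d + r then 1 else 0)
      + complex_of_real (e2 r j) * (if m = r * d + j then 1 else 0)"
    if h: "S * CT = complex_of_real c1" "S * ST = complex_of_real c2" "ca = complex_of_real sg" for S CT ST ca
  proof -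
    have "j < d \<Longrightarrow> j \<noteq> r \<Longrightarrow> j * d + r \<noteq> r * d + j" using idx_swap assms by blast
    then show ?thesis using h assms
      by (cases "j < r"; cases "j = r"; cases "j < d"; cases "m = j * d + r"; cases "m = r * d + j")
         (auto simp: e1_def e2_def algebra_simps)
  qed
  show ?thesis
    unfolding Psi_def Let_def A B C j_def[symmetric] m_def[symmetric] cos_alpha
    by (rule gen) (simp_all add: c1_def c2_def)
qed

end

lemma val_expand:
  fixes p :: "nat \<Rightarrow> complex" and W R :: "nat \<Rightarrow> nat \<Rightarrow> complex" and N :: nat
  defines "u \<equiv> \<lambda>e. \<Sum>b<N. cnj (W b e) * p b"
  shows "(\<Sum>a<N. \<Sum>b<N. cnj (p a) * mmul N (mmul N W R) (madj W) a b * p b)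
       = (\<Sum>c<N. \<Sum>e<N. cnj (u c) * R c e * u e)"
proof -
  have s1: "(\<Sum>b<N. mmul N (mmul N W R) (madj W) a b * p b) = (\<Sum>e<N. mmul N W R a e * u e)" for a
    unfolding mmul_def[of N "mmul N W R"] madj_def u_def
    by (simp add: sum_distrib_left sum_distrib_right mult.assoc) (rule sum.swap)
  have s2: "(\<Sum>a<N. cnj (p a) * mmul N W R a e) = (\<Sum>c<N. cnj (u c) * R c e)" for e
    unfolding mmul_def u_def
    by (simp add: sum_distrib_left sum_distrib_right mult_ac) (rule sum.swap)
  have "(\<Sum>a<N. \<Sum>b<N. cnj (p a) * mmul N (mmul N W R) (madj W) a b * p b)
     = (\<Sum>a<N. cnj (p a) * (\<Sum>e<N. mmul N W R a e * u e))"
    by (simp add: s1[symmetric] sum_distrib_left mult.assoc)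
  also have "\<dots> = (\<Sum>e<N. (\<Sum>a<N. cnj (p a) * mmul N W R a e) * u e)"
    by (simp add: sum_distrib_left sum_distrib_right mult.assoc) (rule sum.swap)
  also have "\<dots> = (\<Sum>e<N. \<Sum>c<N. cnj (u c) * R c e * u e)"
    by (simp add: s2 sum_distrib_right)
  also have "\<dots> = (\<Sum>c<N. \<Sum>e<N. cnj (u c) * R c e * u e)"
    by (rule sum.swap)
  finally show ?thesis .
qed

lemma rho_expand:
  fixes u :: "nat \<Rightarrow> complex" and P :: "nat \<Rightarrow> nat \<Rightarrow> complex" and N d :: nat
  shows "(\<Sum>c<N. \<Sum>e<N. cnj (u c) * ((1 / of_nat d) * (\<Sum>r<d. P r c * cnj (P r e))) * u e)
     = complex_of_real ((1 / real d) * (\<Sum>r<d. (cmod (\<Sum>c<N. cnj (u c) * P r c))^2))"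
proof -
  define f where "f r c e = (cnj (u c) * P r c) * cnj (cnj (u e) * P r e)" for r c e
  have "(\<Sum>c<N. \<Sum>e<N. cnj (u c) * ((1 / of_nat d) * (\<Sum>r<d. P r c * cnj (P r e))) * u e)
     = (\<Sum>c<N. \<Sum>e<N. (1 / of_nat d) * (\<Sum>r<d. f r c e))"
    unfolding f_def by (simp add: sum_distrib_left sum_distrib_right mult_ac)
  also have "\<dots> = (1 / of_nat d) * (\<Sum>c<N. \<Sum>e<N. \<Sum>r<d. f r c e)"
    by (simp add: sum_distrib_left)
  also have "(\<Sum>c<N. \<Sum>e<N. \<Sum>r<d. f r c e) = (\<Sum>c<N. \<Sum>r<d. \<Sum>e<N. f r c e)"
    by (rule sum.cong[OF refl], rule sum.swap)
  also have "\<dots> = (\<Sum>r<d. \<Sum>c<N. \<Sum>e<N. f r c e)"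
    by (rule sum.swap)
  also have "\<dots> = (\<Sum>r<d. (\<Sum>c<N. cnj (u c) * P r c) * cnj (\<Sum>c<N. cnj (u c) * P r c))"
    unfolding f_def by (simp add: sum_product cnj_sum)
  also have "\<dots> = (\<Sum>r<d. complex_of_real ((cmod (\<Sum>c<N. cnj (u c) * P r c))^2))"
    by (rule sum.cong[OF refl]) (simp only: complex_norm_square)
  finally show ?thesis by simp
qed

context fs begin

lemma dpos: "d > 0" using d2 by simp

lemma idx_lt: "j < d \<Longrightarrow> i < d \<Longrightarrow> j + i * d < d^2"
proof -
  assume "j < d" "i < d"
  then have "j + i * d < d + i * d" by simp
  also have "\<dots> = Suc i * d" by simp
  also have "\<dots> \<le> d * d" using \<open>i < d\<close> by (intro mult_le_mono1) simp
  finally show ?thesis by (simp add: power2_eq_square)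
qed

lemma psimax_eq: "psimax d i b = complex_of_real (1 / sqrt (real d)) *
    (if b div d^2 < d \<and> b mod d^2 = b div d^2 + i * d then 1 else 0)"
  unfolding psimax_def tens_def ket_def
  by (simp add: if_distrib[where f="\<lambda>a. a * _"] cong: if_cong)

lemma u_formula:
  assumes "i < d" "e < d^3"
  shows "(\<Sum>b<d^3. cnj (idtens (d^2) V b e) * psimax d i b)
       = complex_of_real (1 / sqrt (real d)) * cnj (V (e div d^2 + i * d) (e mod d^2))"
proof -
  define D where "D = d^2"
  define j where "j = e div D"
  have D0: "D > 0" using dpos unfolding D_def by simp
  have jd: "j < d" using assms(2) unfolding j_def D_def
    by (simp add: less_mult_imp_div_less power3_eq_cube power2_eq_square mult.assoc)
  have jid: "j + i * d < D" using idx_lt[OF jd assms(1)] unfolding D_def .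
  define b0 where "b0 = j * D + (j + i * d)"
  have b0d: "b0 div D = j" "b0 mod D = j + i * d" unfolding b0_def using jid D0 by auto
  have b0N: "b0 < d^3"
  proof -
    have "b0 < j * D + D" unfolding b0_def using jid by simp
    also have "\<dots> = Suc j * D" by simp
    also have "\<dots> \<le> d * D" using jd by (intro mult_le_mono1) simp
    finally show ?thesis by (simp add: D_def power3_eq_cube power2_eq_square)
  qed
  have pw: "cnj (idtens D V b e) * psimax d i b =
      (if b = b0 then complex_of_real (1 / sqrt (real d)) * cnj (V (j + i * d) (e mod D)) else 0)" for b
  proof (cases "b = b0")
    case True
    then show ?thesis using b0d jd unfolding psimax_eq idtens_def D_def[symmetric] j_def[symmetric] by simp
  next
    case False
    have "b div D = j \<Longrightarrow> b mod D = j + i * d \<Longrightarrow> b = b0"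
      unfolding b0_def by (metis div_mult_mod_eq mult.commute)
    then show ?thesis using False unfolding psimax_eq idtens_def D_def[symmetric] j_def[symmetric] by auto
  qed
  show ?thesis
    unfolding D_def[symmetric] j_def[symmetric] using b0N
    by (simp add: pw)
qed

definition "uu V i e = (\<Sum>b<d^3. cnj (idtens (d^2) V b e) * psimax d i b)"
definition "zz V i r = (\<Sum>c<d^3. cnj (uu V i c) * Psi d x r c)"
definition "Fr V = (\<Sum>i<d. (1 / real d) * (\<Sum>r<d. (cmod (zz V i r))^2))"

lemma val_eq:
  "(let N = d^3; W = idtens (d^2) V; M = mmul N (mmul N W (rhoAC d x)) (madj W) in
      (\<Sum>i<d. \<Sum>a<N. \<Sum>b<N. cnj (psimax d i a) * M a b * psimax d i b)) = complex_of_real (Fr V)"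
proof -
  have "(\<Sum>a<d^3. \<Sum>b<d^3. cnj (psimax d i a) * mmul (d^3) (mmul (d^3) (idtens (d^2) V) (rhoAC d x)) (madj (idtens (d^2) V)) a b * psimax d i b)
     = complex_of_real ((1 / real d) * (\<Sum>r<d. (cmod (zz V i r))^2))" for i
    unfolding val_expand zz_def uu_def rhoAC_def by (rule rho_expand)
  then show ?thesis unfolding Let_def Fr_def by simp
qed

lemma zz_formula:
  assumes "i < d"
  shows "zz V i r = complex_of_real (1 / sqrt (real d)) *
     (\<Sum>c<d^3. V (c div d^2 + i * d) (c mod d^2) * Psi d x r c)"
  unfolding zz_def uu_def by (simp add: u_formula assms sum_distrib_left mult.assoc)

end

lemma col_norm:
  assumes U: "unitary_on D V" and m: "m < D"
  shows "(\<Sum>a<D. (cmod (V a m))^2) = 1"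
proof -
  define A :: "complex mat" where "A = mat D D (\<lambda>(a,b). V a b)"
  define B :: "complex mat" where "B = mat D D (\<lambda>(a,b). cnj (V b a))"
  have AD: "A \<in> carrier_mat D D" and BD: "B \<in> carrier_mat D D" unfolding A_def B_def by auto
  have "A * B = 1\<^sub>m D"
  proof (rule eq_matI)
    fix a b assume ab: "a < dim_row (1\<^sub>m D)" "b < dim_col (1\<^sub>m D)"
    then have "(A * B) $$ (a, b) = (\<Sum>k<D. V a k * cnj (V b k))"
      unfolding A_def B_def by (simp add: scalar_prod_def atLeast0LessThan)
    also have "\<dots> = 1\<^sub>m D $$ (a, b)" using U ab unfolding unitary_on_def by simp
    finally show "(A * B) $$ (a, b) = 1\<^sub>m D $$ (a, b)" .
  qed (auto simp: A_def B_def)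
  then have BA: "B * A = 1\<^sub>m D" by (rule mat_mult_left_right_inverse[OF AD BD])
  have "(B * A) $$ (m, m) = (\<Sum>k<D. cnj (V k m) * V k m)"
    using m unfolding A_def B_def by (simp add: scalar_prod_def atLeast0LessThan)
  then have "(\<Sum>k<D. cnj (V k m) * V k m) = 1" using BA m by simp
  moreover have "(\<Sum>k<D. complex_of_real ((cmod (V k m))^2)) = (\<Sum>k<D. cnj (V k m) * V k m)"
    by (rule sum.cong[OF refl]) (simp only: complex_norm_square mult.commute)
  ultimately have "(\<Sum>k<D. complex_of_real ((cmod (V k m))^2)) = 1" by simp
  then show ?thesis by (metis of_real_eq_1_iff of_real_sum)
qed

lemma sum_real_lessThan: "(\<Sum>b<n. real b) = real n * (real n - 1) / 2"
  by (induct n) (simp_all add: field_simps)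

context fs begin

definition "LL = ((real d + 1) * sg + (real d - 1) * dl) / 2"
definition "yv m = (if m div d \<le> m mod d then sg * LL else dl * LL)"
definition "Rr e = (if (e mod d^2) div d = e div d^2 then (e mod d^2) mod d else (e mod d^2) div d)"

lemma sg_dl_pos: "sg > 0 \<or> dl > 0"
proof (rule ccontr)
  assume "\<not> (sg > 0 \<or> dl > 0)"
  then have "sg = 0" "dl = 0" using sg_nn dl_nn by auto
  then have "lam_p d x = 0" "lam_m d x = 0" unfolding sg_def dl_def using dpos by auto
  then show False using sum_pos by simp
qed

lemma LL_pos: "LL > 0"
proof -
  have a: "(real d + 1) * sg \<ge> 0" "(real d - 1) * dl \<ge> 0" using sg_nn dl_nn rd by auto
  have "(real d + 1) * sg > 0 \<or> (real d - 1) * dl > 0" using sg_dl_pos rd by auto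
  then have "0 < (real d + 1) * sg + (real d - 1) * dl" using a by auto
  then show ?thesis unfolding LL_def by simp
qed

lemma yv_nn: "yv m \<ge> 0" unfolding yv_def using sg_nn dl_nn LL_pos by simp

lemma Psi_supp:
  assumes r: "r < d" and nz: "Psi d x r e \<noteq> 0"
  shows "Rr e = r"
proof -
  define j where "j = e div d^2"
  define m where "m = e mod d^2"
  have "(m = j * d + r \<and> e1 r j \<noteq> 0) \<or> (m = r * d + j \<and> e2 r j \<noteq> 0)"
    using nz unfolding Psi_form[OF r] j_def[symmetric] m_def[symmetric] by (auto split: if_splits)
  then show ?thesis
  proof
    assume "m = j * d + r \<and> e1 r j \<noteq> 0"
    then show ?thesis unfolding Rr_def j_def[symmetric] m_def[symmetric] using r by auto
  next
    assume h: "m = r * d + j \<and> e2 r j \<noteq> 0"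
    then have "j < d" "j \<noteq> r" unfolding e2_def using r by (auto split: if_splits)
    then show ?thesis unfolding Rr_def j_def[symmetric] m_def[symmetric] using r h by auto
  qed
qed

lemma Psi_comp:
  assumes r: "r < d" and j: "j < d" and m: "m < d^2"
  shows "Psi d x r (j * d^2 + m) = complex_of_real (e1 r j) * (if m = j * d + r then 1 else 0)
      + complex_of_real (e2 r j) * (if m = r * d + j then 1 else 0)"
  using m dpos unfolding Psi_form[OF r] by simp

lemma e_facts:
  assumes r: "r < d" and j: "j < d"
  shows "j = r \<Longrightarrow> e1 r j = sg" "j = r \<Longrightarrow> e2 r j = 0"
    "j < r \<Longrightarrow> e1 r j = c1" "j < r \<Longrightarrow> e2 r j = c2"
    "r < j \<Longrightarrow> e1 r j = - c2" "r < j \<Longrightarrow> e2 r j = c1"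
  using r j unfolding e1_def e2_def by auto

lemma yv_lo: "b < d \<Longrightarrow> c < d \<Longrightarrow> b \<le> c \<Longrightarrow> yv (b * d + c) = sg * LL"
  unfolding yv_def by simp
lemma yv_hi: "b < d \<Longrightarrow> c < d \<Longrightarrow> c < b \<Longrightarrow> yv (b * d + c) = dl * LL"
  unfolding yv_def by simp

end

lemma sum_two_pts:
  fixes a b :: real and w :: "nat \<Rightarrow> real"
  assumes "m1 < D" "m2 < D" "m1 \<noteq> m2"
  shows "(\<Sum>m<D. (cmod (complex_of_real a * (if m = m1 then 1 else 0) + complex_of_real b * (if m = m2 then 1 else 0)))^2 * w m)
     = a^2 * w m1 + b^2 * w m2"
proof -
  have "(cmod (complex_of_real a * (if m = m1 then 1 else 0) + complex_of_real b * (if m = m2 then 1 else 0)))^2 * w m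
      = (if m = m1 then a^2 * w m1 else 0) + (if m = m2 then b^2 * w m2 else 0)" for m
    using assms(3) by auto
  then show ?thesis using assms by (simp add: sum.distrib)
qed

lemma sum_one_pt:
  fixes a :: real and w :: "nat \<Rightarrow> real"
  assumes "m1 < D"
  shows "(\<Sum>m<D. (cmod (complex_of_real a * (if m = m1 then 1 else 0) + complex_of_real 0 * (if m = m2 then 1 else 0)))^2 * w m)
     = a^2 * w m1"
proof -
  have "(cmod (complex_of_real a * (if m = m1 then 1 else 0) + complex_of_real 0 * (if m = m2 then 1 else 0)))^2 * w m
      = (if m = m1 then a^2 * w m1 else 0)" for m
    by auto
  then show ?thesis using assms by simp
qed

lemma sum_except_one:
  fixes A B :: real
  assumes "r < n"
  shows "(\<Sum>j<n. if j = r then A else B) = A + (real n - 1) * B"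
proof -
  have "(\<Sum>j<n. if j = r then A else B) = (\<Sum>j<n. (if j = r then A - B else 0) + B)"
    by (rule sum.cong) auto
  also have "\<dots> = A - B + real n * B" using assms by (simp add: sum.distrib)
  finally show ?thesis by (simp add: algebra_simps)
qed

lemma half_sq: "(L::real) > 0 \<Longrightarrow> (a^2/2) * (1/(a*L)) = a/(2*L)" "(L::real) > 0 \<Longrightarrow> a^2 / (2 * (a*L)) = a/(2*L)"
  by (cases "a = 0") (simp_all add: power2_eq_square field_simps)
lemma half_sq2: "(L::real) > 0 \<Longrightarrow> a^2 / (2 * (a*L)) = a/(2*L)"
  by (cases "a = 0") (simp_all add: power2_eq_square field_simps)

context fs begin

lemma d3: "d^3 = d * d^2" by (simp add: power3_eq_cube power2_eq_square)

lemma c1_sq: "c1^2 = sg^2 / 2" unfolding c1_eq by (simp add: power_divide)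
lemma c2_sq: "c2^2 = dl^2 / 2" unfolding c2_eq by (simp add: power_divide)

lemma mlt: "b < d \<Longrightarrow> c < d \<Longrightarrow> b * d + c < d^2"
  using idx_lt[of c b] by (simp add: add.commute)

lemma weight:
  assumes r: "r < d"
  shows "(\<Sum>e<d^3. (cmod (Psi d x r e))^2 * (1 / yv (e mod d^2))) = 1"
proof -
  have inner: "(\<Sum>m<d^2. (cmod (Psi d x r (j * d^2 + m)))^2 * (1 / yv ((j * d^2 + m) mod d^2)))
      = (if j = r then sg / LL else (sg + dl) / (2 * LL))" if j: "j < d" for j
  proof -
    have "(\<Sum>m<d^2. (cmod (Psi d x r (j * d^2 + m)))^2 * (1 / yv ((j * d^2 + m) mod d^2)))
       = (\<Sum>m<d^2. (cmod (complex_of_real (e1 r j) * (if m = j * d + r then 1 else 0)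
      + complex_of_real (e2 r j) * (if m = r * d + j then 1 else 0)))^2 * (1 / yv m))"
      by (rule sum.cong[OF refl]) (simp add: Psi_comp r j)
    also have "\<dots> = (if j = r then sg / LL else (sg + dl) / (2 * LL))"
    proof (cases "j = r")
      case True
      then have "(\<Sum>m<d^2. (cmod (complex_of_real (e1 r j) * (if m = j * d + r then 1 else 0)
          + complex_of_real (e2 r j) * (if m = r * d + j then 1 else 0)))^2 * (1 / yv m))
          = sg^2 * (1 / yv (r * d + r))"
        using e_facts[OF r j] sum_one_pt[OF mlt[OF r r], where a=sg and w="\<lambda>m. 1 / yv m"] by simp
      also have "\<dots> = sg / LL" using yv_lo[OF r r] LL_pos by (cases "sg = 0") (simp_all add: power2_eq_square)
      finally show ?thesis using True by simp
    next
      case False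
      have ne: "j * d + r \<noteq> r * d + j" using idx_swap[OF j r] False by blast
      have "(\<Sum>m<d^2. (cmod (complex_of_real (e1 r j) * (if m = j * d + r then 1 else 0)
          + complex_of_real (e2 r j) * (if m = r * d + j then 1 else 0)))^2 * (1 / yv m))
          = (e1 r j)^2 * (1 / yv (j * d + r)) + (e2 r j)^2 * (1 / yv (r * d + j))"
        by (rule sum_two_pts[OF mlt[OF j r] mlt[OF r j] ne])
      also have "\<dots> = (sg + dl) / (2 * LL)"
      proof (cases "j < r")
        case True
        then have "(e1 r j)^2 * (1 / yv (j * d + r)) + (e2 r j)^2 * (1 / yv (r * d + j))
           = (sg^2/2) * (1/(sg*LL)) + (dl^2/2) * (1/(dl*LL))"
          using e_facts[OF r j] yv_lo[OF j r] yv_hi[OF r j] True by (simp add: c1_sq c2_sq)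
        then show ?thesis using LL_pos by (simp add: half_sq half_sq2 add_divide_distrib)
      next
        case F: False
        then have "r < j" using False by simp
        then have "(e1 r j)^2 * (1 / yv (j * d + r)) + (e2 r j)^2 * (1 / yv (r * d + j))
           = (dl^2/2) * (1/(dl*LL)) + (sg^2/2) * (1/(sg*LL))"
          using e_facts[OF r j] yv_hi[OF j r] yv_lo[OF r j] by (simp add: c1_sq c2_sq)
        then show ?thesis using LL_pos by (simp add: half_sq half_sq2 add_divide_distrib)
      qed
      finally show ?thesis using False by simp
    qed
    finally show ?thesis .
  qed
  have "(\<Sum>e<d^3. (cmod (Psi d x r e))^2 * (1 / yv (e mod d^2)))
      = (\<Sum>j<d. \<Sum>m<d^2. (cmod (Psi d x r (j * d^2 + m)))^2 * (1 / yv ((j * d^2 + m) mod d^2)))"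
    unfolding d3 by (rule sum_mult_prod)
  also have "\<dots> = (\<Sum>j<d. if j = r then sg / LL else (sg + dl) / (2 * LL))"
    by (rule sum.cong[OF refl], rule inner) simp
  also have "\<dots> = sg / LL + (real d - 1) * ((sg + dl) / (2 * LL))" by (rule sum_except_one[OF r])
  also have "\<dots> = (2 * sg + (real d - 1) * (sg + dl)) / (2 * LL)" using LL_pos by (simp add: field_simps)
  also have "2 * sg + (real d - 1) * (sg + dl) = 2 * LL" unfolding LL_def by (simp add: algebra_simps)
  also have "(2 * LL) / (2 * LL) = 1" using LL_pos by simp
  finally show ?thesis .
qed

end

lemma sum_if_le:
  fixes P Q :: real
  shows "(\<Sum>c<b + k. if b \<le> c then P else Q) = real k * P + real b * Q"
proof (induct k)
  case 0
  have "(\<Sum>c<b. if b \<le> c then P else Q) = (\<Sum>c<b. Q)" by (rule sum.cong) auto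
  then show ?case by simp
next
  case (Suc k)
  then show ?case by (simp add: algebra_simps)
qed

context fs begin

lemma Psi_y0:
  assumes r: "r < d" and y: "yv (e mod d^2) = 0"
  shows "Psi d x r e = 0"
proof (rule ccontr)
  assume nz: "Psi d x r e \<noteq> 0"
  define j where "j = e div d^2"
  define m where "m = e mod d^2"
  have y': "(m div d \<le> m mod d \<and> sg = 0) \<or> (\<not> m div d \<le> m mod d \<and> dl = 0)"
    using y LL_pos unfolding yv_def m_def[symmetric] by (auto split: if_splits)
  have sq: "c1 = 0 \<longleftrightarrow> sg = 0" "c2 = 0 \<longleftrightarrow> dl = 0" unfolding c1_eq c2_eq by auto
  have "(m = j * d + r \<and> e1 r j \<noteq> 0) \<or> (m = r * d + j \<and> e2 r j \<noteq> 0)"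
    using nz unfolding Psi_form[OF r] j_def[symmetric] m_def[symmetric] by (auto split: if_splits)
  then show False
  proof
    assume h: "m = j * d + r \<and> e1 r j \<noteq> 0"
    then have jd: "j < d" unfolding e1_def using r by (auto split: if_splits)
    have "m div d = j" "m mod d = r" using h r by auto
    then show False using h y' e_facts[OF r jd] sq
      by (cases "j = r"; cases "j < r") auto
  next
    assume h: "m = r * d + j \<and> e2 r j \<noteq> 0"
    then have jd: "j < d" "j \<noteq> r" unfolding e2_def using r by (auto split: if_splits)
    have "m div d = r" "m mod d = j" using h jd by auto
    then show False using h y' e_facts[OF r jd(1)] sq jd
      by (cases "j < r") auto
  qed
qed

lemma CS_step:
  assumes r: "r < d"
  shows "(cmod (\<Sum>e<d^3. cnj (u e) * Psi d x r e))^2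
     \<le> (\<Sum>e<d^3. if Rr e = r then yv (e mod d^2) * (cmod (u e))^2 else 0)"
proof -
  define f where "f e = (if Rr e = r then sqrt (yv (e mod d^2)) * cmod (u e) else 0)" for e
  define g where "g e = cmod (Psi d x r e) / sqrt (yv (e mod d^2))" for e
  have pw: "cmod (cnj (u e) * Psi d x r e) = f e * g e" for e
  proof (cases "Psi d x r e = 0")
    case True
    then show ?thesis unfolding g_def by simp
  next
    case False
    then have "Rr e = r" by (rule Psi_supp[OF r])
    moreover have "yv (e mod d^2) > 0" using Psi_y0[OF r] False yv_nn
      by (metis order_le_less)
    ultimately show ?thesis unfolding f_def g_def by (simp add: norm_mult)
  qed
  have fg_nn: "0 \<le> (\<Sum>e<d^3. f e * g e)" unfolding f_def g_def
    by (intro sum_nonneg) (simp add: yv_nn)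
  have "cmod (\<Sum>e<d^3. cnj (u e) * Psi d x r e) \<le> (\<Sum>e<d^3. cmod (cnj (u e) * Psi d x r e))"
    by (rule norm_sum)
  also have "\<dots> = (\<Sum>e<d^3. f e * g e)" by (simp add: pw)
  finally have "(cmod (\<Sum>e<d^3. cnj (u e) * Psi d x r e))^2 \<le> (\<Sum>e<d^3. f e * g e)^2"
    by (intro power_mono) simp_all
  also have "\<dots> \<le> (\<Sum>e<d^3. (f e)^2) * (\<Sum>e<d^3. (g e)^2)"
    by (rule Cauchy_Schwarz_ineq_sum)
  also have "(\<Sum>e<d^3. (g e)^2) = (\<Sum>e<d^3. (cmod (Psi d x r e))^2 * (1 / yv (e mod d^2)))"
    unfolding g_def by (rule sum.cong[OF refl]) (simp add: power_divide yv_nn)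
  also have "\<dots> = 1" by (rule weight[OF r])
  also have "(\<Sum>e<d^3. (f e)^2) = (\<Sum>e<d^3. if Rr e = r then yv (e mod d^2) * (cmod (u e))^2 else 0)"
    unfolding f_def by (rule sum.cong[OF refl]) (simp add: power_mult_distrib yv_nn)
  finally show ?thesis by simp
qed

lemma yv_sum: "(\<Sum>m<d^2. yv m) = real d * LL^2"
proof -
  have "(\<Sum>m<d^2. yv m) = (\<Sum>b<d. \<Sum>c<d. yv (b * d + c))"
    unfolding power2_eq_square by (rule sum_mult_prod)
  also have "\<dots> = (\<Sum>b<d. real (d - b) * (sg * LL) + real b * (dl * LL))"
  proof (rule sum.cong[OF refl])
    fix b assume b: "b \<in> {..<d}"
    have "(\<Sum>c<d. yv (b * d + c)) = (\<Sum>c<b + (d - b). if b \<le> c then sg * LL else dl * LL)"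
      using b by (intro sum.cong) (auto simp: yv_def)
    also have "\<dots> = real (d - b) * (sg * LL) + real b * (dl * LL)" by (rule sum_if_le)
    finally show "(\<Sum>c<d. yv (b * d + c)) = real (d - b) * (sg * LL) + real b * (dl * LL)" .
  qed
  also have "\<dots> = (\<Sum>b<d. (real d - real b) * (sg * LL) + real b * (dl * LL))"
    by (rule sum.cong) (auto simp: of_nat_diff)
  also have "\<dots> = (real d * real d - real d * (real d - 1) / 2) * (sg * LL) + real d * (real d - 1) / 2 * (dl * LL)"
    by (simp add: sum.distrib sum_distrib_right[symmetric] sum_subtractf sum_real_lessThan algebra_simps)
  also have "\<dots> = real d * LL^2"
    unfolding LL_def by (simp add: power2_eq_square field_simps)
  finally show ?thesis .
qed

end

context fs begin

lemma S_le:
  assumes i: "i < d"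
  shows "(\<Sum>r<d. (cmod (zz V i r))^2) \<le> (\<Sum>e<d^3. yv (e mod d^2) * (cmod (uu V i e))^2)"
proof -
  define A where "A e = yv (e mod d^2) * (cmod (uu V i e))^2" for e
  have "(\<Sum>r<d. (cmod (zz V i r))^2) \<le> (\<Sum>r<d. \<Sum>e<d^3. if Rr e = r then A e else 0)"
    unfolding zz_def A_def by (intro sum_mono CS_step) simp
  also have "\<dots> = (\<Sum>e<d^3. \<Sum>r<d. if Rr e = r then A e else 0)" by (rule sum.swap)
  also have "\<dots> = (\<Sum>e<d^3. if Rr e < d then A e else 0)" by (simp add: sum.delta)
  also have "\<dots> \<le> (\<Sum>e<d^3. A e)" by (intro sum_mono) (simp add: A_def yv_nn)
  finally show ?thesis unfolding A_def .
qed

lemma uu_norm: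
  assumes i: "i < d" and e: "e < d^3"
  shows "(cmod (uu V i e))^2 = (1 / real d) * (cmod (V (e div d^2 + i * d) (e mod d^2)))^2"
  unfolding uu_def u_formula[OF i e] by (simp add: norm_mult norm_divide power_mult_distrib power_divide)

lemma Fr_le:
  assumes U: "unitary_on (d^2) V"
  shows "Fr V \<le> LL^2 / real d"
proof -
  define h where "h a m = yv m * (cmod (V a m))^2" for a m
  have T: "(\<Sum>e<d^3. yv (e mod d^2) * (cmod (uu V i e))^2) = (1 / real d) * (\<Sum>j<d. \<Sum>m<d^2. h (j + i * d) m)"
    if i: "i < d" for i
  proof -
    have "(\<Sum>e<d^3. yv (e mod d^2) * (cmod (uu V i e))^2)
        = (\<Sum>e<d^3. (1 / real d) * h (e div d^2 + i * d) (e mod d^2))"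
      unfolding h_def by (rule sum.cong[OF refl]) (simp add: uu_norm i)
    also have "\<dots> = (\<Sum>j<d. \<Sum>m<d^2. (1 / real d) * h ((j * d^2 + m) div d^2 + i * d) ((j * d^2 + m) mod d^2))"
      unfolding d3 by (rule sum_mult_prod)
    also have "\<dots> = (\<Sum>j<d. \<Sum>m<d^2. (1 / real d) * h (j + i * d) m)"
      using dpos by (intro sum.cong refl) simp
    finally show ?thesis by (simp add: sum_distrib_left)
  qed
  have "Fr V \<le> (\<Sum>i<d. (1 / real d) * ((1 / real d) * (\<Sum>j<d. \<Sum>m<d^2. h (j + i * d) m)))"
    unfolding Fr_def
  proof (rule sum_mono)
    fix i assume "i \<in> {..<d}"
    then have i: "i < d" by simp
    have "(\<Sum>r<d. (cmod (zz V i r))^2) \<le> (1 / real d) * (\<Sum>j<d. \<Sum>m<d^2. h (j + i * d) m)"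
      using S_le[OF i, of V] T[OF i] by simp
    then show "1 / real d * (\<Sum>r<d. (cmod (zz V i r))\<^sup>2) \<le> 1 / real d * (1 / real d * (\<Sum>j<d. \<Sum>m<d\<^sup>2. h (j + i * d) m))"
      by (intro mult_left_mono) simp_all
  qed
  also have "\<dots> = (1 / real d) * (1 / real d) * (\<Sum>i<d. \<Sum>j<d. \<Sum>m<d^2. h (j + i * d) m)"
    by (simp add: sum_distrib_left mult.assoc)
  also have "(\<Sum>i<d. \<Sum>j<d. \<Sum>m<d^2. h (j + i * d) m) = (\<Sum>i<d. \<Sum>m<d^2. \<Sum>j<d. h (j + i * d) m)"
    by (rule sum.cong[OF refl], rule sum.swap)
  also have "\<dots> = (\<Sum>m<d^2. \<Sum>i<d. \<Sum>j<d. h (j + i * d) m)" by (rule sum.swap)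
  also have "\<dots> = (\<Sum>m<d^2. yv m * (\<Sum>a<d * d. (cmod (V a m))^2))"
    unfolding h_def sum_mult_prod[of "\<lambda>a. (cmod (V a _))^2" d d]
    by (simp add: sum_distrib_left add.commute)
  also have "\<dots> = (\<Sum>m<d^2. yv m)"
    using col_norm[OF U] by (intro sum.cong refl) (simp add: power2_eq_square)
  also have "\<dots> = real d * LL^2" by (rule yv_sum)
  finally show ?thesis using dpos by (simp add: field_simps power2_eq_square)
qed

end

context fs begin

definition "tau a = (a mod d) * d + a div d"
definition "kk = complex_of_real (1 / sqrt 2)"
definition "V0 a c = (if c = a then (if tau a = a then 1 else kk)
    else if c = tau a then (if tau a < a then kk else - kk) else 0)"

lemma kk_sq: "kk * cnj kk = 1/2" "kk * kk = 1/2"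
  unfolding kk_def by (simp_all add: of_real_mult[symmetric] del: of_real_mult) 

lemma digit_eq: "q < d \<Longrightarrow> q' < d \<Longrightarrow> p * d + q = p' * d + q' \<longleftrightarrow> p = p' \<and> q = q'"
proof
  assume a: "q < d" "q' < d" "p * d + q = p' * d + q'"
  have "(p * d + q) div d = (p' * d + q') div d" "(p * d + q) mod d = (p' * d + q') mod d" using a(3) by simp_all
  then show "p = p' \<and> q = q'" using a(1,2) dpos by simp
qed simp

lemma tau_lt: "a < d^2 \<Longrightarrow> tau a < d^2"
  unfolding tau_def using mlt[of "a mod d" "a div d"] dpos
  by (simp add: less_mult_imp_div_less power2_eq_square)

lemma tau_tau: "a < d^2 \<Longrightarrow> tau (tau a) = a"
proof -
  assume a: "a < d^2"
  have ad: "a div d < d" using a by (simp add: less_mult_imp_div_less power2_eq_square)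
  show ?thesis unfolding tau_def using ad dpos by simp
qed

lemma V0_supp: "c \<noteq> a \<Longrightarrow> c \<noteq> tau a \<Longrightarrow> V0 a c = 0" unfolding V0_def by simp

lemma V0_unitary: "unitary_on (d^2) V0"
  unfolding unitary_on_def
proof (intro allI impI)
  fix a b assume a: "a < d^2" and b: "b < d^2"
  have sub: "{a, tau a} \<subseteq> {..<d^2}" using a tau_lt by auto
  have "(\<Sum>c<d^2. V0 a c * cnj (V0 b c)) = (\<Sum>c\<in>{a, tau a}. V0 a c * cnj (V0 b c))"
  proof (rule sum.mono_neutral_right)
    show "\<forall>c\<in>{..<d^2} - {a, tau a}. V0 a c * cnj (V0 b c) = 0" by (simp add: V0_supp)
  qed (use sub in auto)
  also have "\<dots> = (if a = b then 1 else 0)"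
  proof (cases "tau a = a")
    case True
    have "V0 b a = (if a = b then 1 else 0)"
    proof (cases "a = b")
      case False
      have "a \<noteq> tau b" using True tau_tau[OF b] False by metis
      then show ?thesis using False unfolding V0_def by auto
    qed (use True in \<open>simp add: V0_def\<close>)
    then show ?thesis using True by (simp add: V0_def)
  next
    case False
    have ttb: "tau (tau b) = b" by (rule tau_tau[OF b])
    have tta: "tau (tau a) = a" by (rule tau_tau[OF a])
    show ?thesis
    proof (cases "b = a")
      case True
      then show ?thesis using False kk_sq by (simp add: V0_def) (metis mult.commute)
    next
      case ba: False
      show ?thesis
      proof (cases "b = tau a")
        case True
        have tb: "tau b = a" using True tta by simp
        have "V0 b a = (if a < tau a then kk else - kk)" unfolding V0_def using tb True False ba by auto
        moreover have "V0 b (tau a) = kk" unfolding V0_def using tb True False by auto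
        moreover have "V0 a a = kk" "V0 a (tau a) = (if tau a < a then kk else - kk)"
          unfolding V0_def using False by auto
        ultimately show ?thesis using False ba kk_sq
          by (cases "a < tau a") (auto simp: linorder_not_less)
      next
        case bt: False
        have "a \<noteq> tau b" using bt ttb by metis
        have "tau a \<noteq> tau b" using ba tta ttb by metis
        have "V0 b a = 0" "V0 b (tau a) = 0" unfolding V0_def
          using ba bt \<open>a \<noteq> tau b\<close> \<open>tau a \<noteq> tau b\<close> by auto
        then show ?thesis using False ba by simp
      qed
    qed
  qed
  finally show "(\<Sum>c<d^2. V0 a c * cnj (V0 b c)) = (if a = b then 1 else 0)" .
qed

end

lemma sum_pts:
  fixes g :: "nat \<Rightarrow> complex"
  assumes "m1 < D" "m2 < D"
  shows "(\<Sum>m<D. g m * (complex_of_real A * (if m = m1 then 1 else 0) + complex_of_real B * (if m = m2 then 1 else 0)))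
      = g m1 * complex_of_real A + g m2 * complex_of_real B"
proof -
  have "(\<Sum>m<D. g m * (complex_of_real A * (if m = m1 then 1 else 0) + complex_of_real B * (if m = m2 then 1 else 0)))
     = (\<Sum>m<D. (if m = m1 then g m1 * complex_of_real A else 0) + (if m = m2 then g m2 * complex_of_real B else 0))"
    by (rule sum.cong) (auto simp: algebra_simps)
  then show ?thesis using assms by (simp add: sum.distrib)
qed

context fs begin

lemma digit_less: "q < d \<Longrightarrow> q' < d \<Longrightarrow> p < p' \<Longrightarrow> p * d + q < p' * d + q'"
proof -
  assume a: "q < d" "q' < d" "p < p'"
  have "p * d + q < p * d + d" using a by simp
  also have "\<dots> = Suc p * d" by simp
  also have "\<dots> \<le> p' * d" using a by (intro mult_le_mono1) simp
  finally show ?thesis by simp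
qed

lemma V0_digits:
  assumes i: "i < d" and j: "j < d" and p: "p < d" and q: "q < d"
  shows "V0 (j + i * d) (p * d + q) = (if p = i \<and> q = j then (if i = j then 1 else kk)
     else if p = j \<and> q = i then (if j < i then kk else - kk) else 0)"
proof -
  have ta: "tau (j + i * d) = j * d + i" unfolding tau_def using i j by simp
  have e1: "p * d + q = j + i * d \<longleftrightarrow> p = i \<and> q = j" using digit_eq[OF q j, of p i] by (simp add: add.commute)
  have e2: "p * d + q = j * d + i \<longleftrightarrow> p = j \<and> q = i" using digit_eq[OF q i, of p j] .
  have e3: "j * d + i = j + i * d \<longleftrightarrow> i = j" using digit_eq[OF i j, of j i] by (auto simp: add.commute)
  have e4: "j * d + i < j + i * d \<longleftrightarrow> j < i" if ne: "i \<noteq> j"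
  proof (cases "j < i")
    case True
    then show ?thesis using digit_less[OF i j, of j i] by (simp add: add.commute)
  next
    case False
    then have "i < j" using ne by simp
    then show ?thesis using digit_less[OF j i, of i j] False by (simp add: add.commute)
  qed
  show ?thesis unfolding V0_def ta using e1 e2 e3 e4 by auto
qed

lemma kk_c: "kk * complex_of_real c1 + kk * complex_of_real c2 = complex_of_real ((sg + dl) / 2)"
proof -
  have "(1 / sqrt 2) * (sg / sqrt 2) + (1 / sqrt 2) * (dl / sqrt 2) = (sg + dl) / 2"
    by (simp add: field_simps)
  then show ?thesis unfolding kk_def c1_eq c2_eq by (simp flip: of_real_mult of_real_add)
qed

lemma zz_V0:
  assumes i: "i < d" and r: "r < d"
  shows "zz V0 i r = (if i = r then complex_of_real (1 / sqrt (real d) * LL) else 0)"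
proof -
  have "(\<Sum>c<d^3. V0 (c div d^2 + i * d) (c mod d^2) * Psi d x r c)
      = (\<Sum>j<d. \<Sum>m<d^2. V0 ((j * d^2 + m) div d^2 + i * d) ((j * d^2 + m) mod d^2) * Psi d x r (j * d^2 + m))"
    unfolding d3 by (rule sum_mult_prod)
  also have "\<dots> = (\<Sum>j<d. V0 (j + i * d) (j * d + r) * complex_of_real (e1 r j) + V0 (j + i * d) (r * d + j) * complex_of_real (e2 r j))"
  proof (rule sum.cong[OF refl])
    fix j assume "j \<in> {..<d}"
    then have j: "j < d" by simp
    have "(\<Sum>m<d^2. V0 ((j * d^2 + m) div d^2 + i * d) ((j * d^2 + m) mod d^2) * Psi d x r (j * d^2 + m))
       = (\<Sum>m<d^2. V0 (j + i * d) m * (complex_of_real (e1 r j) * (if m = j * d + r then 1 else 0)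
      + complex_of_real (e2 r j) * (if m = r * d + j then 1 else 0)))"
      using dpos by (intro sum.cong refl) (simp add: Psi_comp r j)
    also have "\<dots> = V0 (j + i * d) (j * d + r) * complex_of_real (e1 r j) + V0 (j + i * d) (r * d + j) * complex_of_real (e2 r j)"
      by (rule sum_pts[OF mlt[OF j r] mlt[OF r j]])
    finally show "(\<Sum>m<d^2. V0 ((j * d^2 + m) div d^2 + i * d) ((j * d^2 + m) mod d^2) * Psi d x r (j * d^2 + m))
       = V0 (j + i * d) (j * d + r) * complex_of_real (e1 r j) + V0 (j + i * d) (r * d + j) * complex_of_real (e2 r j)" .
  qed
  also have "\<dots> = (\<Sum>j<d. if i = r then complex_of_real (if j = r then sg else (sg + dl) / 2) else 0)"
  proof (rule sum.cong[OF refl])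
    fix j assume "j \<in> {..<d}"
    then have j: "j < d" by simp
    show "V0 (j + i * d) (j * d + r) * complex_of_real (e1 r j) + V0 (j + i * d) (r * d + j) * complex_of_real (e2 r j)
       = (if i = r then complex_of_real (if j = r then sg else (sg + dl) / 2) else 0)"
      unfolding V0_digits[OF i j j r] V0_digits[OF i j r j]
      using e_facts[OF r j] kk_c
      by (cases "j = r"; cases "j < r"; cases "i = r") (auto simp: algebra_simps)
  qed
  also have "\<dots> = (if i = r then complex_of_real LL else 0)"
  proof (cases "i = r")
    case True
    have "(\<Sum>j<d. complex_of_real (if j = r then sg else (sg + dl) / 2)) = complex_of_real (\<Sum>j<d. if j = r then sg else (sg + dl) / 2)"
      by simp
    also have "(\<Sum>j<d. if j = r then sg else (sg + dl) / 2) = sg + (real d - 1) * ((sg + dl) / 2)"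
      by (rule sum_except_one[OF r])
    also have "\<dots> = LL" unfolding LL_def by (simp add: field_simps)
    finally show ?thesis using True by simp
  qed simp
  finally show ?thesis unfolding zz_formula[OF i] by simp
qed

lemma Fr_V0: "Fr V0 = LL^2 / real d"
proof -
  have "(\<Sum>r<d. (cmod (zz V0 i r))^2) = LL^2 / real d" if i: "i < d" for i
  proof -
    have "(\<Sum>r<d. (cmod (zz V0 i r))^2) = (\<Sum>r<d. if r = i then LL^2 / real d else 0)"
      using LL_pos dpos by (intro sum.cong refl) (auto simp: zz_V0 i norm_mult norm_divide power_mult_distrib power_divide)
    then show ?thesis using i by simp
  qed
  then have "Fr V0 = (\<Sum>i<d. (1 / real d) * (LL^2 / real d))" unfolding Fr_def by simp
  also have "\<dots> = LL^2 / real d" using dpos by simp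
  finally show ?thesis .
qed

end

lemma form2_gen:
  fixes d :: nat and x :: real
  assumes rd: "real d \<ge> 2" and xl: "-1 \<le> x" and xu: "x \<le> 1"
  shows "(1/4) * ((real d + 1) * sqrt (lam_p d x) + (real d - 1) * sqrt (lam_m d x))^2
    = (1 / (2 * real d)) * (real d + x + sqrt ((real d ^ 2 - 1) * (1 - x^2)))"
proof -
  have lp_nn: "lam_p d x \<ge> 0" using rd xl by (simp add: lam_p_def)
  have lm_nn: "lam_m d x \<ge> 0" using rd xu by (simp add: lam_m_def)
  have dpos: "real d > 0" using rd by simp
  define a where "a = sqrt (lam_p d x)"
  define b where "b = sqrt (lam_m d x)"
  define s where "s = sqrt ((real d ^ 2 - 1) * (1 - x^2))"
  have a2: "a^2 = lam_p d x" unfolding a_def using lp_nn by simp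
  have b2: "b^2 = lam_m d x" unfolding b_def using lm_nn by simp
  have ab_nn: "a * b \<ge> 0" unfolding a_def b_def using lp_nn lm_nn by (intro mult_nonneg_nonneg) simp_all
  have dd: "real d * real d \<ge> 2 * 2" using rd by (intro mult_mono) auto
  have d21: "real d ^ 2 - 1 > 0" using dd by (simp add: power2_eq_square)
  have x2: "1 - x^2 \<ge> 0" using xl xu abs_square_le_1[of x] by simp
  have s_nn: "s \<ge> 0" unfolding s_def using d21 x2 by simp
  have s2: "s^2 = (real d ^ 2 - 1) * (1 - x^2)" unfolding s_def using d21 x2 by simp
  have lpm: "lam_p d x * lam_m d x = (1 - x^2) / (real d ^ 2 * (real d ^ 2 - 1))"
    unfolding lam_p_def lam_m_def using rd dd by (simp add: divide_simps) (simp add: algebra_simps power2_eq_square)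
  have ab: "(real d ^ 2 - 1) * (a * b) = s / real d"
  proof -
    have "((real d ^ 2 - 1) * (a * b))^2 = (real d ^ 2 - 1)^2 * (lam_p d x * lam_m d x)"
      by (simp add: power_mult_distrib a2 b2)
    also have "\<dots> = (real d ^ 2 - 1) * (1 - x^2) / real d ^ 2"
      unfolding lpm using d21 dpos by (simp add: power2_eq_square)
    also have "\<dots> = (s / real d)^2" unfolding power_divide s2 ..
    finally have "((real d ^ 2 - 1) * (a * b))^2 = (s / real d)^2" .
    moreover have "(real d ^ 2 - 1) * (a * b) \<ge> 0" using ab_nn d21 by simp
    moreover have "s / real d \<ge> 0" using s_nn dpos by simp
    ultimately show ?thesis using power2_eq_iff_nonneg by blast
  qed
  have "((real d + 1) * a + (real d - 1) * b)^2
      = (real d + 1)^2 * a^2 + (real d - 1)^2 * b^2 + 2 * ((real d ^ 2 - 1) * (a * b))"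
    by (simp add: power2_eq_square algebra_simps)
  also have "\<dots> = (real d + 1)^2 * lam_p d x + (real d - 1)^2 * lam_m d x + 2 * (s / real d)"
    unfolding a2 b2 ab ..
  also have "(real d + 1)^2 * lam_p d x = (real d + 1) * (1 + x) / real d"
    unfolding lam_p_def using rd by (simp add: power2_eq_square)
  also have "(real d - 1)^2 * lam_m d x = (real d - 1) * (1 - x) / real d"
    unfolding lam_m_def using rd by (simp add: power2_eq_square)
  also have "(real d + 1) * (1 + x) / real d + (real d - 1) * (1 - x) / real d + 2 * (s / real d)
      = (2 * real d + 2 * x + 2 * s) / real d"
    by (simp add: add_divide_distrib[symmetric] algebra_simps)
  finally have "((real d + 1) * a + (real d - 1) * b)^2 = (2 * real d + 2 * x + 2 * s) / real d" .
  then show ?thesis unfolding a_def[symmetric] b_def[symmetric] s_def[symmetric] using dpos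
    by (simp add: field_simps)
qed
context fs begin

lemma FEF_val: "FEF d (rhoAC d x) = LL^2 / real d"
  unfolding FEF_def
proof (rule Greatest_equality)
  show "\<exists>V. unitary_on (d^2) V \<and> (let N = d^3; W = idtens (d^2) V; M = mmul N (mmul N W (rhoAC d x)) (madj W)
        in complex_of_real (LL^2 / real d) = (\<Sum>i<d. \<Sum>a<N. \<Sum>b<N. cnj (psimax d i a) * M a b * psimax d i b))"
    using V0_unitary val_eq[of V0] Fr_V0 unfolding Let_def by (intro exI[of _ V0]) simp
next
  fix y assume "\<exists>V. unitary_on (d^2) V \<and> (let N = d^3; W = idtens (d^2) V; M = mmul N (mmul N W (rhoAC d x)) (madj W)
        in complex_of_real y = (\<Sum>i<d. \<Sum>a<N. \<Sum>b<N. cnj (psimax d i a) * M a b * psimax d i b))"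
  then obtain V where U: "unitary_on (d^2) V" and
    e: "complex_of_real y = (let N = d^3; W = idtens (d^2) V; M = mmul N (mmul N W (rhoAC d x)) (madj W)
        in (\<Sum>i<d. \<Sum>a<N. \<Sum>b<N. cnj (psimax d i a) * M a b * psimax d i b))"
    unfolding Let_def by auto
  then have "complex_of_real y = complex_of_real (Fr V)" using val_eq[of V] by simp
  then have "y = Fr V" by simp
  then show "y \<le> LL^2 / real d" using Fr_le[OF U] by simp
qed

lemma form1: "LL^2 / real d = (1/4) * ((real d + 1) * sqrt (lam_p d x) + (real d - 1) * sqrt (lam_m d x))^2"
proof -
  define Q where "Q = (real d + 1) * sqrt (lam_p d x) + (real d - 1) * sqrt (lam_m d x)"
  have "LL = sqrt (real d) * (Q / 2)"
    unfolding LL_def sg_def dl_def Q_def by (simp add: real_sqrt_mult algebra_simps)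
  then have "LL^2 = (sqrt (real d))^2 * (Q / 2)^2"
    by (simp only: power_mult_distrib)
  also have "(sqrt (real d))^2 = real d" by simp
  finally have "LL^2 = real d * (Q / 2)^2" .
  then show ?thesis unfolding Q_def[symmetric] using dpos by (simp add: power_divide)
qed

lemma form2: "(1/4) * ((real d + 1) * sqrt (lam_p d x) + (real d - 1) * sqrt (lam_m d x))^2
    = (1 / (2 * real d)) * (real d + x + sqrt ((real d ^ 2 - 1) * (1 - x^2)))"
  by (rule form2_gen[OF rd xl xu])

end

theorem mainTheorem2:
  fixes d :: nat and x :: real
  assumes "d \<ge> 2" and "-1 \<le> x" and "x \<le> 1"
  shows "FEF d (rhoAC d x) =
           (1/4) * ((real d + 1) * sqrt (lam_p d x) + (real d - 1) * sqrt (lam_m d x))^2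
       \<and> FEF d (rhoAC d x) =
           (1 / (2 * real d)) * (real d + x + sqrt ((real d ^ 2 - 1) * (1 - x^2)))"
proof -
  interpret fs d x using assms by unfold_locales
  show ?thesis by (intro conjI) (simp_all only: FEF_val form1 form2)
qed

end
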